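(* Let $G$ be a $2$-connected cubic multigraph, let $H\neq G$ be a peninsula of $G$, and let $e=ab$ be the external port of $H$. Then there exists an $a$-$b$-path in $G$ all of whose internal vertices lie in $V(H)$ and whose length is at least $2\log|H|-2\log\log|H|-8$ (with $\log=\log_2$).
   Context: Multigraphs are finite and loopless, parallel edges allowed; $|H|$ is the number of vertices. A cut of $G$ is a bipartition $(U,V(G)\setminus U)$; its cut-set is the set of edges between the sides. A tombolo-cut is a cut whose cut-set (the tombolo) has exactly $2$ edges. For a tombolo-cut with tombolo $\{a_1b_1,a_2b_2\}$, $a_1,a_2\in U$, the pairs $\{a_1,a_2\}$ and $\{b_1,b_2\}$ are its port-pairs. A virtual subgraph of $G$ is a multigraph $H$ with $V(H)\subseteq V(G)$ whose edges are all edges of $G$ with both ends in $V(H)$ (real edges) plus one (possibly parallel) virtual edge $ab$ for every port-pair $\{a,b\}\subseteq V(H)$ of a tombolo both of whose edges are not in $E(H)$. A peninsula is a virtual subgraph $H$ such that $(V(H),V(G)\setminus V(H))$ is a tombolo-cut, or $H=G$. If $H\ne G$ is a peninsula with tombolo $\{a_1b_1,a_2b_2\}$, $a_1,a_2\in V(H)$, then its external port is the edge $b_1b_2$ (the virtual edge it creates in virtual subgraphs on the other side). *)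

theory Defs
  imports Complex_Main
begin

text \<open>A finite loopless multigraph is given by a vertex set V, an edge set E
 (edges are abstract objects, so parallel edges are allowed) and a map ends
 assigning to each edge its set of exactly two distinct end vertices.\<close>

definition multigraph :: "'v set \<Rightarrow> 'e set \<Rightarrow> ('e \<Rightarrow> 'v set) \<Rightarrow> bool" where
  "multigraph V E ends \<longleftrightarrow> finite V \<and> finite E \<and>
     (\<forall>e\<in>E. ends e \<subseteq> V \<and> card (ends e) = 2)"

definition degree :: "'e set \<Rightarrow> ('e \<Rightarrow> 'v set) \<Rightarrow> 'v \<Rightarrow> nat" where
  "degree E ends v = card {e\<in>E. v \<in> ends e}"

definition cubic :: "'v set \<Rightarrow> 'e set \<Rightarrow> ('e \<Rightarrow> 'v set) \<Rightarrow> bool" where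
  "cubic V E ends \<longleftrightarrow> (\<forall>v\<in>V. degree E ends v = 3)"

definition adjacent :: "'e set \<Rightarrow> ('e \<Rightarrow> 'v set) \<Rightarrow> 'v \<Rightarrow> 'v \<Rightarrow> bool" where
  "adjacent E ends x y \<longleftrightarrow> (\<exists>e\<in>E. ends e = {x, y})"

definition walk :: "'e set \<Rightarrow> ('e \<Rightarrow> 'v set) \<Rightarrow> 'v list \<Rightarrow> bool" where
  "walk E ends p \<longleftrightarrow> p \<noteq> [] \<and> (\<forall>i. Suc i < length p \<longrightarrow> adjacent E ends (p ! i) (p ! Suc i))"

definition path :: "'e set \<Rightarrow> ('e \<Rightarrow> 'v set) \<Rightarrow> 'v list \<Rightarrow> bool" where
  "path E ends p \<longleftrightarrow> walk E ends p \<and> distinct p"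

definition path_length :: "'v list \<Rightarrow> nat" where
  "path_length p = length p - 1"

definition connected_on :: "'e set \<Rightarrow> ('e \<Rightarrow> 'v set) \<Rightarrow> 'v set \<Rightarrow> bool" where
  "connected_on E ends S \<longleftrightarrow> (\<forall>x\<in>S. \<forall>y\<in>S. \<exists>p. walk E ends p \<and> set p \<subseteq> S \<and> hd p = x \<and> last p = y)"

definition two_connected :: "'v set \<Rightarrow> 'e set \<Rightarrow> ('e \<Rightarrow> 'v set) \<Rightarrow> bool" where
  "two_connected V E ends \<longleftrightarrow> card V \<ge> 3 \<and> connected_on E ends V \<and>
     (\<forall>v\<in>V. connected_on E ends (V - {v}))"

definition cut_set :: "'e set \<Rightarrow> ('e \<Rightarrow> 'v set) \<Rightarrow> 'v set \<Rightarrow> 'e set" where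
  "cut_set E ends U = {e\<in>E. ends e \<inter> U \<noteq> {} \<and> ends e - U \<noteq> {}}"

definition tombolo_cut :: "'v set \<Rightarrow> 'e set \<Rightarrow> ('e \<Rightarrow> 'v set) \<Rightarrow> 'v set \<Rightarrow> bool" where
  "tombolo_cut V E ends U \<longleftrightarrow> U \<subseteq> V \<and> card (cut_set E ends U) = 2"

end

theory Submission
  imports Defs
begin


definition rw :: "('v \<Rightarrow> 'v \<Rightarrow> bool) \<Rightarrow> 'v set \<Rightarrow> 'v list \<Rightarrow> bool" where
  "rw R S p \<longleftrightarrow> p \<noteq> [] \<and> successively R p \<and> set p \<subseteq> S"

definition rp :: "('v \<Rightarrow> 'v \<Rightarrow> bool) \<Rightarrow> 'v set \<Rightarrow> 'v list \<Rightarrow> bool" where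
  "rp R S p \<longleftrightarrow> rw R S p \<and> distinct p"

lemma rw_append:
  assumes "rw R S p" "rw R S q" "last p = hd q"
  shows "rw R S (p @ tl q)" "hd (p @ tl q) = hd p" "last (p @ tl q) = last q"
proof -
  obtain h t where q: "q = h # t" using assms(2) unfolding rw_def by (cases q) auto
  have pne: "p \<noteq> []" using assms(1) unfolding rw_def by simp
  have "successively R (p @ t)" using assms unfolding rw_def q
    by (auto simp add: successively_append_iff successively_Cons)
  then show "rw R S (p @ tl q)" using assms pne unfolding rw_def q by auto
  show "hd (p @ tl q) = hd p" using pne by simp
  show "last (p @ tl q) = last q" using pne assms(3) unfolding q by (cases t) auto
qed

lemma walk_to_path:
  assumes "rw R S p"
  shows "\<exists>q. rp R S q \<and> hd q = hd p \<and> last q = last p \<and> set q \<subseteq> set p"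
  using assms
proof (induction "length p" arbitrary: p rule: less_induct)
  case less
  show ?case
  proof (cases "distinct p")
    case True then show ?thesis using less.prems unfolding rp_def by blast
  next
    case False
    then obtain xs ys zs y where p: "p = xs @ [y] @ ys @ [y] @ zs"
      using not_distinct_decomp by blast
    define p' where "p' = xs @ [y] @ zs"
    have "successively R p" using less.prems unfolding rw_def by simp
    then have s1: "successively R ((xs @ [y]) @ (ys @ [y] @ zs))" unfolding p by simp
    then have "successively R (xs @ [y])" by (simp only: successively_append_iff)
    moreover have "successively R ((ys @ [y]) @ zs)" using s1 by (simp only: successively_append_iff append_assoc)
    then have "successively R zs" "zs \<noteq> [] \<longrightarrow> R y (hd zs)"
      by (auto simp: successively_append_iff successively_Cons)
    ultimately have "successively R (xs @ [y] @ zs)"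
      by (auto simp add: successively_append_iff successively_Cons)
    then have "successively R p'" unfolding p'_def .
    then have "rw R S p'" using less.prems unfolding rw_def p p'_def by auto
    moreover have "length p' < length p" unfolding p p'_def by simp
    ultimately obtain q where "rp R S q \<and> hd q = hd p' \<and> last q = last p' \<and> set q \<subseteq> set p'"
      using less.hyps by blast
    moreover have "hd p' = hd p" unfolding p p'_def by (cases xs) simp_all
    moreover have "last p' = last p" unfolding p p'_def by (cases zs) simp_all
    moreover have "set p' \<subseteq> set p" unfolding p p'_def by auto
    ultimately show ?thesis by auto
  qed
qed


lemma rw_mono:
  assumes "rw R S p" "\<And>a b. a \<in> set p \<Longrightarrow> b \<in> set p \<Longrightarrow> R a b \<Longrightarrow> R' a b" "set p \<subseteq> S'"
  shows "rw R' S' p"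
  using assms unfolding rw_def by (auto intro: successively_mono)

lemma rp_len2:
  assumes "rp R S p" "hd p \<noteq> last p"
  shows "length p \<ge> 2"
  using assms unfolding rp_def rw_def by (cases p) (auto, cases "tl p", auto)

lemma base_case:
  assumes fin: "finite S" and c3: "card S \<ge> 3"
    and conn: "\<forall>u\<in>S. \<forall>x\<in>S-{u}. \<forall>y\<in>S-{u}. \<exists>p. rw R (S-{u}) p \<and> hd p = x \<and> last p = y"
    and xy: "x \<in> S" "y \<in> S" "x \<noteq> y"
  shows "\<exists>Q. rp R S Q \<and> hd Q = x \<and> last Q = y \<and> 3 \<le> length Q"
proof -
  have "card (S - {x,y}) = card S - card {x,y}" using fin xy by (intro card_Diff_subset) auto
  also have "card {x,y} = 2" using xy by simp
  finally have "card (S - {x,y}) \<ge> 1" using c3 by simp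
  then have "S - {x,y} \<noteq> {}" by (metis card.empty not_one_le_zero)
  then obtain w where w: "w \<in> S" "w \<noteq> x" "w \<noteq> y" by blast
  obtain p1 where p1: "rw R (S-{y}) p1" "hd p1 = x" "last p1 = w" using conn xy w by blast
  obtain p2 where p2: "rw R (S-{x}) p2" "hd p2 = w" "last p2 = y" using conn xy w by blast
  define R' where "R' = (\<lambda>a b. R a b \<and> {a,b} \<noteq> {x,y})"
  have y1: "y \<notin> set p1" "set p1 \<subseteq> S" using p1(1) unfolding rw_def by auto
  have x2: "x \<notin> set p2" "set p2 \<subseteq> S" using p2(1) unfolding rw_def by auto
  have q1: "rw R' S p1" using p1(1) by (rule rw_mono) (use y1 in \<open>auto simp: R'_def doubleton_eq_iff\<close>)
  have q2: "rw R' S p2" using p2(1) by (rule rw_mono) (use x2 in \<open>auto simp: R'_def doubleton_eq_iff\<close>)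
  have W: "rw R' S (p1 @ tl p2)" "hd (p1 @ tl p2) = x" "last (p1 @ tl p2) = y"
    using rw_append[OF q1 q2] p1 p2 by auto
  obtain Q where Q0: "rp R' S Q" "hd Q = hd (p1 @ tl p2)" "last Q = last (p1 @ tl p2)"
    using walk_to_path[OF W(1)] by blast
  have Q: "rp R' S Q" "hd Q = x" "last Q = y" using Q0 W by auto
  have "length Q \<ge> 2" using rp_len2[OF Q(1)] Q xy by simp
  moreover have "length Q \<noteq> 2"
  proof
    assume "length Q = 2"
    then have "Q = [hd Q, last Q]" by (cases Q; cases "tl Q") auto
    then have "successively R' [x, y]" using Q unfolding rp_def rw_def by metis
    then show False unfolding R'_def by simp
  qed
  moreover have "rp R S Q" using Q(1) unfolding rp_def rw_def R'_def by (auto intro: successively_mono)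
  ultimately show ?thesis using Q by auto
qed


lemma in_set_drop_nth:
  assumes "u \<in> set (drop n xs)"
  shows "\<exists>m. n \<le> m \<and> m < length xs \<and> xs ! m = u"
proof -
  obtain k where "k < length (drop n xs)" "drop n xs ! k = u" using assms by (metis in_set_conv_nth)
  then show ?thesis by (intro exI[of _ "n + k"]) auto
qed

lemma successively_take: "successively R xs \<Longrightarrow> successively R (take n xs)"
  using successively_append_iff[of R "take n xs" "drop n xs"] by simp

lemma successively_drop: "successively R xs \<Longrightarrow> successively R (drop n xs)"
  using successively_append_iff[of R "take n xs" "drop n xs"] by simp

lemma step_case:
  assumes P: "rp R S P" "hd P = x" "last P = w"
    and Q: "rp R S Q" "hd Q = x" "last Q = w"
    and PQ: "set P \<inter> set Q = {x,w}" and xw: "x \<noteq> w"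
    and Rwy: "R w y" and y: "y \<in> S" "y \<noteq> w" "x \<noteq> y"
    and r: "rp R (S-{w}) r" "hd r = x" "last r = y"
    and j: "j < length r" "r!j \<in> set P"
    and mx: "\<forall>m. j < m \<and> m < length r \<longrightarrow> r!m \<notin> set P \<union> set Q"
  shows "\<exists>P' Q'. rp R S P' \<and> rp R S Q' \<and> hd P' = x \<and> last P' = y \<and> hd Q' = x \<and> last Q' = y
           \<and> set P' \<inter> set Q' = {x,y} \<and> (3 \<le> length P' \<or> 3 \<le> length Q')"
proof -
  have Pne: "P \<noteq> []" and Pd: "distinct P" and Ps: "successively R P" and PS: "set P \<subseteq> S"
    using P(1) unfolding rp_def rw_def by auto
  have Qne: "Q \<noteq> []" and Qd: "distinct Q" and Qs: "successively R Q" and QS: "set Q \<subseteq> S"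
    using Q(1) unfolding rp_def rw_def by auto
  have rne: "r \<noteq> []" and rd: "distinct r" and rs: "successively R r" and rS: "set r \<subseteq> S - {w}"
    using r(1) unfolding rp_def rw_def by auto
  obtain i where i: "i < length P" "P!i = r!j" using j(2) by (metis in_set_conv_nth)
  define P1 where "P1 = take (Suc i) P"
  define P2 where "P2 = drop (Suc j) r"
  have P1e: "P1 = take i P @ [r!j]" unfolding P1_def using i by (simp add: take_Suc_conv_app_nth)
  have P1ne: "P1 \<noteq> []" "last P1 = r!j" unfolding P1e by simp_all
  have "r!j \<in> set r" using j(1) by simp
  then have rjw: "r!j \<noteq> w" and rjS: "r!j \<in> S" using rS by blast+
  have iw: "Suc i < length P"
  proof (rule ccontr)
    assume "\<not> Suc i < length P"
    then have ii: "i = length P - 1" using i(1) by linarith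
    have "last P = P ! (length P - 1)" using Pne by (rule last_conv_nth)
    then have "last P = r!j" using ii i(2) by simp
    then show False using rjw P(3) by simp
  qed
  have wP1: "w \<notin> set P1"
  proof
    assume a: "w \<in> set P1"
    have "last (drop (Suc i) P) = w" using iw P(3) by (simp add: last_drop)
    moreover have "drop (Suc i) P \<noteq> []" using iw by simp
    then have "last (drop (Suc i) P) \<in> set (drop (Suc i) P)" by (rule last_in_set)
    ultimately have "w \<in> set (drop (Suc i) P)" by simp
    moreover have "set P1 \<inter> set (drop (Suc i) P) = {}"
    proof -
      have "distinct (take (Suc i) P @ drop (Suc i) P)" using Pd by simp
      then show ?thesis unfolding P1_def distinct_append by blast
    qed
    ultimately show False using a by blast
  qed
  have P1P: "set P1 \<subseteq> set P" unfolding P1_def by (rule set_take_subset)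
  have P2out: "\<And>u. u \<in> set P2 \<Longrightarrow> u \<notin> set P \<union> set Q"
  proof -
    fix u assume "u \<in> set P2"
    then obtain m where "Suc j \<le> m" "m < length r" "r!m = u" unfolding P2_def using in_set_drop_nth[of u "Suc j" r] by blast
    then show "u \<notin> set P \<union> set Q" using mx by auto
  qed
  have lr: "last r = r ! (length r - 1)" using rne by (simp add: last_conv_nth)
  have yQ: "y \<notin> set Q"
  proof
    assume yq: "y \<in> set Q"
    show False
    proof (cases "j = length r - 1")
      case True
      then have "y \<in> set P" using j(2) r(3) lr by simp
      then show False using yq PQ y by (metis IntI insert_iff empty_iff)
    next
      case False
      then have "j < length r - 1" using j(1) by simp
      moreover have "length r - 1 < length r" using rne by simp
      ultimately have "r ! (length r - 1) \<notin> set P \<union> set Q" using mx by blast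
      then show False using yq r(3) lr by simp
    qed
  qed
  define P' where "P' = P1 @ P2"
  define Q' where "Q' = Q @ [y]"
  have link: "P2 \<noteq> [] \<Longrightarrow> R (last P1) (hd P2)"
  proof -
    assume "P2 \<noteq> []"
    then have sj: "Suc j < length r" unfolding P2_def by simp
    then have "hd P2 = r ! Suc j" unfolding P2_def by (simp add: hd_drop_conv_nth)
    then show ?thesis using P1ne successively_nth[OF rs sj] by simp
  qed
  have s1: "successively R P1" unfolding P1_def by (rule successively_take[OF Ps])
  have s2: "successively R P2" unfolding P2_def by (rule successively_drop[OF rs])
  have sP': "successively R P'" unfolding P'_def
    using s1 s2 link P1ne by (auto simp add: successively_append_iff)
  have d1: "distinct P1" unfolding P1_def using Pd by simp
  have d2: "distinct P2" unfolding P2_def using rd by simp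
  have d12: "set P1 \<inter> set P2 = {}" using P2out P1P by blast
  have dP': "distinct P'" unfolding P'_def using d1 d2 d12 by simp
  have SP': "set P' \<subseteq> S" unfolding P'_def P1_def P2_def
    using PS rS set_take_subset[of "Suc i" P] set_drop_subset[of "Suc j" r] unfolding set_append by blast
  have rpP': "rp R S P'" using sP' dP' SP' P1ne unfolding rp_def rw_def P'_def by simp
  have hdP': "hd P' = x" unfolding P'_def P1_def using Pne P(2) by (cases P) auto
  have lastP': "last P' = y"
  proof (cases "P2 = []")
    case True
    then have "j = length r - 1" using j(1) unfolding P2_def by simp
    then show ?thesis using True P1ne r(3) lr unfolding P'_def by simp
  next
    case False
    then have "Suc j < length r" unfolding P2_def by simp
    then have "last P2 = last r" unfolding P2_def by (simp add: last_drop)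
    then show ?thesis using False r(3) unfolding P'_def by simp
  qed
  have sQ': "successively R Q'" unfolding Q'_def using Qs Rwy Q(3) Qne by (simp add: successively_append_iff)
  have rpQ': "rp R S Q'" using sQ' Qd QS yQ y unfolding rp_def rw_def Q'_def by simp
  have hdQ': "hd Q' = x" "last Q' = y" using Q(2) Qne unfolding Q'_def by auto
  have lQ: "length Q \<ge> 2" using rp_len2[OF Q(1)] Q xw by simp
  have "x \<in> set P'" "y \<in> set P'" using hdP' lastP' rpP' unfolding rp_def rw_def
    by (metis hd_in_set, metis last_in_set)
  moreover have "x \<in> set Q'" "y \<in> set Q'" using Q(2) Qne unfolding Q'_def by auto
  ultimately have xyPQ: "{x,y} \<subseteq> set P' \<inter> set Q'" by blast
  have int: "set P' \<inter> set Q' = {x,y}"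
  proof
    show "{x,y} \<subseteq> set P' \<inter> set Q'" by (rule xyPQ)
  next
    show "set P' \<inter> set Q' \<subseteq> {x,y}"
    proof
      fix u assume u: "u \<in> set P' \<inter> set Q'"
      show "u \<in> {x,y}"
      proof (cases "u \<in> set P2")
        case True
        then show ?thesis using P2out u unfolding Q'_def by auto
      next
        case False
        then have "u \<in> set P1" using u unfolding P'_def by auto
        then have "u \<in> set P" "u \<noteq> w" using P1P wP1 by auto
        then show ?thesis using u PQ unfolding Q'_def by auto
      qed
    qed
  qed
  have "3 \<le> length Q'" using lQ unfolding Q'_def by simp
  then show ?thesis using rpP' rpQ' hdP' lastP' hdQ' int by blast
qed


definition two_paths :: "('v \<Rightarrow> 'v \<Rightarrow> bool) \<Rightarrow> 'v set \<Rightarrow> 'v \<Rightarrow> 'v \<Rightarrow> bool" where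
  "two_paths R S x y \<longleftrightarrow> (\<exists>P Q. rp R S P \<and> rp R S Q \<and> hd P = x \<and> last P = y \<and> hd Q = x \<and> last Q = y
           \<and> set P \<inter> set Q = {x,y} \<and> (3 \<le> length P \<or> 3 \<le> length Q))"

lemma third_vertex:
  assumes "finite S" "card S \<ge> 3" "x \<in> S" "y \<in> S"
  shows "\<exists>w\<in>S. w \<noteq> x \<and> w \<noteq> y"
proof -
  have "card {x,y} \<le> 2" by (simp add: card_insert_le_m1)
  then have "\<not> S \<subseteq> {x,y}" using assms by (metis card_mono finite.emptyI finite_insert le_trans not_less_eq_eq numeral_2_eq_2 numeral_3_eq_3)
  then show ?thesis by blast
qed

lemma whitney:
  assumes fin: "finite S" and c3: "card S \<ge> 3"
    and conn: "\<forall>u\<in>S. \<forall>x\<in>S-{u}. \<forall>y\<in>S-{u}. \<exists>p. rw R (S-{u}) p \<and> hd p = x \<and> last p = y"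
    and x: "x \<in> S" and y: "y \<in> S" "x \<noteq> y"
  shows "two_paths R S x y"
proof -
  have main: "rp R S p \<Longrightarrow> hd p = x \<Longrightarrow> length p = Suc (Suc k) \<Longrightarrow> two_paths R S x (last p)" for k p
  proof (induction k arbitrary: p)
    case 0
    then obtain y' where p: "p = [x, y']"
      by (cases p; cases "tl p") auto
    then have xy': "x \<noteq> y'" "y' \<in> S" "R x y'" using "0.prems"(1) unfolding rp_def rw_def by auto
    obtain Q where Q: "rp R S Q" "hd Q = x" "last Q = y'" "3 \<le> length Q"
      using base_case[OF fin c3 conn x xy'(2) xy'(1)] by blast
    have "x \<in> set Q" "y' \<in> set Q" using Q unfolding rp_def rw_def by (metis hd_in_set, metis last_in_set)
    then have "set [x,y'] \<inter> set Q = {x,y'}" by auto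
    then show ?case unfolding two_paths_def p using Q "0.prems"(1) p by (intro exI[of _ "[x,y']"] exI[of _ Q]) auto
  next
    case (Suc k)
    have "p \<noteq> []" using Suc.prems(3) by auto
    then obtain p' y where p: "p = p' @ [y]" by (metis append_butlast_last_id)
    have lp': "length p' = Suc (Suc k)" using Suc.prems(3) p by simp
    then have p'ne: "p' \<noteq> []" by auto
    have ps: "successively R (p' @ [y])" and pd: "distinct (p' @ [y])" and pS: "set (p' @ [y]) \<subseteq> S"
      using Suc.prems(1) p unfolding rp_def rw_def by auto
    have rp': "rp R S p'" using ps pd pS p'ne unfolding rp_def rw_def by (simp add: successively_append_iff)
    have hp': "hd p' = x" using Suc.prems(2) p p'ne by simp
    define w where "w = last p'"
    have IH: "two_paths R S x w" using Suc.IH[OF rp' hp' lp'] unfolding w_def .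
    have Rwy: "R w y" using ps p'ne unfolding w_def by (simp add: successively_append_iff)
    have yS: "y \<in> S" using pS by simp
    have "w \<in> set p'" unfolding w_def using p'ne by simp
    then have yw: "y \<noteq> w" using pd by auto
    have "x \<in> set p'" using hp' p'ne by auto
    then have xy: "x \<noteq> y" using pd by auto
    have xw: "x \<noteq> w"
    proof -
      obtain t where t: "p' = x # t" using hp' p'ne by (cases p') auto
      then have "t \<noteq> []" using lp' by auto
      then have "w \<in> set t" unfolding w_def t by simp
      then show ?thesis using pd t by auto
    qed
    have lastp: "last p = y" using p by simp
    obtain P Q where PQ0: "rp R S P" "rp R S Q" "hd P = x" "last P = w" "hd Q = x" "last Q = w"
      "set P \<inter> set Q = {x,w}"
      using IH unfolding two_paths_def by blast
    have wS: "w \<in> S" using \<open>w \<in> set p'\<close> pS by auto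
    have "x \<in> S - {w}" "y \<in> S - {w}" using x yS xw yw by auto
    then obtain r0 where r0: "rw R (S-{w}) r0" "hd r0 = x" "last r0 = y" using conn wS by blast
    obtain r where r1: "rp R (S-{w}) r" "hd r = hd r0" "last r = last r0" using walk_to_path[OF r0(1)] by blast
    have r: "rp R (S-{w}) r" "hd r = x" "last r = y" using r1 r0 by auto
    have rne: "r \<noteq> []" using r(1) unfolding rp_def rw_def by simp
    define J where "J = {m. m < length r \<and> r!m \<in> set P \<union> set Q}"
    have finJ: "finite J" unfolding J_def by simp
    have "r!0 = x" using r(2) rne by (simp add: hd_conv_nth)
    moreover have "x \<in> set P" using PQ0(1,3) unfolding rp_def rw_def by auto
    ultimately have "0 \<in> J" unfolding J_def using rne by simp
    define j where "j = Max J"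
    have jJ: "j \<in> J" unfolding j_def using finJ \<open>0 \<in> J\<close> by (intro Max_in) auto
    have jl: "j < length r" "r!j \<in> set P \<union> set Q" using jJ unfolding J_def by auto
    have mx: "\<forall>m. j < m \<and> m < length r \<longrightarrow> r!m \<notin> set P \<union> set Q"
    proof (intro allI impI)
      fix m assume m: "j < m \<and> m < length r"
      show "r!m \<notin> set P \<union> set Q"
      proof
        assume "r!m \<in> set P \<union> set Q"
        then have "m \<in> J" unfolding J_def using m by simp
        then have "m \<le> j" unfolding j_def using finJ by simp
        then show False using m by simp
      qed
    qed
    show ?case
    proof (cases "r!j \<in> set P")
      case True
      show ?thesis unfolding lastp two_paths_def
        by (rule step_case[OF PQ0(1,3,4) PQ0(2,5,6) PQ0(7) xw Rwy yS yw xy r jl(1) True mx])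
    next
      case False
      then have jQ: "r!j \<in> set Q" using jl by simp
      have PQ': "set Q \<inter> set P = {x,w}" using PQ0(7) by blast
      have mx': "\<forall>m. j < m \<and> m < length r \<longrightarrow> r!m \<notin> set Q \<union> set P" using mx by blast
      show ?thesis unfolding lastp two_paths_def
        by (rule step_case[OF PQ0(2,5,6) PQ0(1,3,4) PQ' xw Rwy yS yw xy r jl(1) jQ mx'])
    qed
  qed
  obtain u where u: "u \<in> S" "u \<noteq> x" "u \<noteq> y" using third_vertex[OF fin c3 x y(1)] by blast
  then have "x \<in> S - {u}" "y \<in> S - {u}" using x y by auto
  then obtain p0 where p0: "rw R (S-{u}) p0" "hd p0 = x" "last p0 = y" using conn u(1) by blast
  have "rw R S p0" using p0(1) unfolding rw_def by auto
  then obtain p where p1: "rp R S p" "hd p = hd p0" "last p = last p0" using walk_to_path by blast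
  have p: "rp R S p" "hd p = x" "last p = y" using p1 p0 by auto
  have "length p \<ge> 2" using rp_len2[OF p(1)] p y by simp
  then have "length p = Suc (Suc (length p - 2))" by simp
  from main[OF p(1,2) this] show ?thesis using p(3) by simp
qed



lemma walk_iff: "walk E ends p \<longleftrightarrow> p \<noteq> [] \<and> successively (adjacent E ends) p"
  unfolding walk_def successively_conv_nth by simp

lemma adjacent_sym: "adjacent E ends x y \<Longrightarrow> adjacent E ends y x"
  unfolding adjacent_def by (simp add: insert_commute)

lemma rw_rev:
  assumes "rw R S p" "\<And>x y. R x y \<Longrightarrow> R y x"
  shows "rw R S (rev p)" "hd (rev p) = last p" "last (rev p) = hd p"
proof -
  have "successively R p" using assms(1) unfolding rw_def by simp
  then have "successively (\<lambda>x y. R y x) p" by (rule successively_mono) (use assms(2) in blast)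
  then show "rw R S (rev p)" using assms(1) unfolding rw_def by simp
  show "hd (rev p) = last p" "last (rev p) = hd p" using assms(1) unfolding rw_def
    by (simp_all add: hd_rev last_rev)
qed

lemma conn_via_center:
  assumes "\<And>z. z \<in> A \<Longrightarrow> \<exists>p. rw R A p \<and> hd p = z \<and> last p = c" "\<And>x y. R x y \<Longrightarrow> R y x"
    and "x \<in> A" "y \<in> A"
  shows "\<exists>p. rw R A p \<and> hd p = x \<and> last p = y"
proof -
  obtain p1 where p1: "rw R A p1" "hd p1 = x" "last p1 = c" using assms(1,3) by blast
  obtain p2 where p2: "rw R A p2" "hd p2 = y" "last p2 = c" using assms(1,4) by blast
  note r2 = rw_rev[OF p2(1) assms(2)]
  have "last p1 = hd (rev p2)" using p1 r2 p2 by simp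
  note a = rw_append[OF p1(1) r2(1) this]
  show ?thesis using a p1 r2 p2 by (intro exI[of _ "p1 @ tl (rev p2)"]) simp
qed

lemma third_elem:
  assumes "finite A" "card A = 3"
  shows "\<exists>e\<in>A. e \<noteq> e1 \<and> e \<noteq> e2"
proof -
  have "card {e1,e2} \<le> 2" by (simp add: card_insert_le_m1)
  then have "\<not> A \<subseteq> {e1,e2}" using assms by (metis card_mono finite.emptyI finite_insert le_trans not_less_eq_eq numeral_2_eq_2 numeral_3_eq_3 order_refl)
  then show ?thesis by blast
qed


locale setting =
  fixes V :: "'v set" and E :: "'e set" and ends :: "'e \<Rightarrow> 'v set"
    and U :: "'v set" and e1 e2 :: 'e and a1 a2 b1 b2 :: 'v
  assumes mg: "multigraph V E ends"
    and cub: "cubic V E ends"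
    and tc: "two_connected V E ends"
    and tomb: "tombolo_cut V E ends U"
    and UV: "U \<noteq> V"
    and cut: "cut_set E ends U = {e1, e2}"
    and e1: "ends e1 = {a1, b1}" and a1U: "a1 \<in> U" and b1U: "b1 \<notin> U"
    and e2: "ends e2 = {a2, b2}" and a2U: "a2 \<in> U" and b2U: "b2 \<notin> U"
begin

abbreviation "adj \<equiv> adjacent E ends"

lemma e12: "e1 \<noteq> e2"
  using tomb cut unfolding tombolo_cut_def by auto

lemma e1E: "e1 \<in> E" and e2E: "e2 \<in> E"
  using cut unfolding cut_set_def by auto

lemma UsubV: "U \<subseteq> V" using tomb unfolding tombolo_cut_def by simp

lemma finV: "finite V" using mg unfolding multigraph_def by simp
lemma finU: "finite U" using finV UsubV finite_subset by blast
lemma finE: "finite E" using mg unfolding multigraph_def by simp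

lemma b1V: "b1 \<in> V" using mg e1E e1 unfolding multigraph_def by auto
lemma b2V: "b2 \<in> V" using mg e2E e2 unfolding multigraph_def by auto

lemma adj_ends:
  assumes "adj x y" shows "x \<noteq> y" "x \<in> V" "y \<in> V"
proof -
  obtain e where e: "e \<in> E" "ends e = {x,y}" using assms unfolding adjacent_def by blast
  then have "card {x,y} = 2" "{x,y} \<subseteq> V" using mg unfolding multigraph_def by auto
  then show "x \<noteq> y" "x \<in> V" "y \<in> V" by (auto simp: card_insert_if split: if_splits)
qed

lemma crossing:
  assumes "adj x y" "x \<in> U" "y \<notin> U"
  shows "(x = a1 \<and> y = b1) \<or> (x = a2 \<and> y = b2)"
proof -
  obtain e where e: "e \<in> E" "ends e = {x,y}" using assms unfolding adjacent_def by blast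
  then have "e \<in> cut_set E ends U" unfolding cut_set_def using assms by auto
  then have "e = e1 \<or> e = e2" using cut by auto
  then show ?thesis
  proof
    assume "e = e1"
    then have "{x,y} = {a1,b1}" using e e1 by simp
    then show ?thesis using assms a1U b1U by (auto simp: doubleton_eq_iff)
  next
    assume "e = e2"
    then have "{x,y} = {a2,b2}" using e e2 by simp
    then show ?thesis using assms a2U b2U by (auto simp: doubleton_eq_iff)
  qed
qed

lemma exit_walk:
  "p \<noteq> [] \<Longrightarrow> successively adj p \<Longrightarrow> set p \<subseteq> T \<Longrightarrow> hd p \<in> U \<Longrightarrow> (\<exists>z\<in>set p. z \<notin> U) \<Longrightarrow>
   \<exists>q. rw adj (U \<inter> T) q \<and> hd q = hd p \<and> ((last q = a1 \<and> b1 \<in> T) \<or> (last q = a2 \<and> b2 \<in> T))"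
proof (induction p)
  case Nil then show ?case by simp
next
  case (Cons x rest)
  have xU: "x \<in> U" using Cons.prems by simp
  have restne: "rest \<noteq> []" using Cons.prems xU by auto
  then obtain y rest' where r: "rest = y # rest'" by (cases rest) auto
  have axy: "adj x y" and srest: "successively adj rest" using Cons.prems(2) r by auto
  have xT: "x \<in> T" and restT: "set rest \<subseteq> T" using Cons.prems(3) by auto
  show ?case
  proof (cases "y \<in> U")
    case False
    then have c: "(x = a1 \<and> y = b1) \<or> (x = a2 \<and> y = b2)" using crossing[OF axy xU] by simp
    have "y \<in> T" using restT r by simp
    then show ?thesis using c xU xT unfolding rw_def
      by (intro exI[of _ "[x]"]) auto
  next
    case True
    have "\<exists>z\<in>set rest. z \<notin> U" using Cons.prems(5) xU by auto
    then obtain q where q: "rw adj (U \<inter> T) q" "hd q = y" "(last q = a1 \<and> b1 \<in> T) \<or> (last q = a2 \<and> b2 \<in> T)"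
      using Cons.IH[OF restne srest restT] True r by auto
    have qne: "q \<noteq> []" and sq: "successively adj q" and qU: "set q \<subseteq> U \<inter> T" using q(1) unfolding rw_def by auto
    have "successively adj (x # q)" using sq qne axy q(2) by (cases q) auto
    then have "rw adj (U \<inter> T) (x # q)" using qU xU xT unfolding rw_def by auto
    then show ?thesis using q qne by (intro exI[of _ "x # q"]) auto
  qed
qed


lemma conn_G:
  assumes "w \<in> V" "x \<in> V - {w}" "y \<in> V - {w}"
  shows "\<exists>p. p \<noteq> [] \<and> successively adj p \<and> set p \<subseteq> V - {w} \<and> hd p = x \<and> last p = y"
proof -
  have "connected_on E ends (V - {w})" using tc assms(1) unfolding two_connected_def by blast
  then obtain p where "walk E ends p" "set p \<subseteq> V - {w}" "hd p = x" "last p = y"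
    using assms(2,3) unfolding connected_on_def by blast
  then show ?thesis unfolding walk_iff by blast
qed

lemma rw_adj_rev:
  assumes "rw adj A p" shows "rw adj A (rev p)" "hd (rev p) = last p" "last (rev p) = hd p"
  using rw_rev[OF assms adjacent_sym] by auto

lemma third_edge:
  assumes "x \<in> V"
  shows "\<exists>e\<in>E. x \<in> ends e \<and> e \<noteq> e1 \<and> e \<noteq> e2"
proof -
  have "card {e\<in>E. x \<in> ends e} = 3" using cub assms unfolding cubic_def degree_def by simp
  moreover have "finite {e\<in>E. x \<in> ends e}" using finE by simp
  ultimately show ?thesis using third_elem[of "{e\<in>E. x \<in> ends e}" e1 e2] by blast
qed

lemma other_end:
  assumes "e \<in> E" "x \<in> ends e"
  shows "\<exists>w. w \<noteq> x \<and> ends e = {x, w}"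
proof -
  have c: "card (ends e) = 2" using mg assms unfolding multigraph_def by simp
  then obtain u v where uv: "ends e = {u,v}" "u \<noteq> v" unfolding card_2_iff by blast
  then show ?thesis using assms(2) by (auto simp: insert_commute)
qed

lemma card_U: "card U \<ge> 2"
proof -
  have "a1 \<in> V" using a1U UsubV by auto
  then obtain e where e: "e \<in> E" "a1 \<in> ends e" "e \<noteq> e1" "e \<noteq> e2" using third_edge by blast
  obtain w where w: "w \<noteq> a1" "ends e = {a1, w}" using other_end[OF e(1,2)] by blast
  have "w \<in> U"
  proof (rule ccontr)
    assume "w \<notin> U"
    then have "e \<in> cut_set E ends U" using e w a1U unfolding cut_set_def by auto
    then show False using cut e by auto
  qed
  then have "{a1, w} \<subseteq> U" using a1U by simp
  then have "card {a1, w} \<le> card U" using finU by (rule card_mono[rotated])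
  then show ?thesis using w by simp
qed

lemma b12: "b1 \<noteq> b2"
proof
  assume eq: "b1 = b2"
  obtain e where e: "e \<in> E" "b1 \<in> ends e" "e \<noteq> e1" "e \<noteq> e2" using third_edge b1V by blast
  obtain w where w: "w \<noteq> b1" "ends e = {b1, w}" using other_end[OF e(1,2)] by blast
  have wV: "w \<in> V" using mg e w unfolding multigraph_def by auto
  have wU: "w \<notin> U"
  proof
    assume "w \<in> U"
    then have "e \<in> cut_set E ends U" using e w b1U unfolding cut_set_def by auto
    then show False using cut e by auto
  qed
  have "a1 \<in> V - {b1}" "w \<in> V - {b1}" using a1U UsubV b1U w wV by auto
  then obtain p where p: "p \<noteq> []" "successively adj p" "set p \<subseteq> V - {b1}" "hd p = a1" "last p = w"
    using conn_G b1V by blast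
  have "\<exists>z\<in>set p. z \<notin> U" using p wU by (metis last_in_set)
  then obtain q where "rw adj (U \<inter> (V - {b1})) q" "(last q = a1 \<and> b1 \<in> V - {b1}) \<or> (last q = a2 \<and> b2 \<in> V - {b1})"
    using exit_walk[OF p(1,2,3)] p(4) a1U by auto
  then show False using eq by auto
qed

definition R :: "'v \<Rightarrow> 'v \<Rightarrow> bool" where
  "R x y \<longleftrightarrow> (x \<in> U \<and> y \<in> U \<and> adj x y) \<or> (x = b1 \<and> (y = a1 \<or> y = a2)) \<or> (y = b1 \<and> (x = a1 \<or> x = a2))"

lemma R_sym: "R x y \<Longrightarrow> R y x"
  unfolding R_def using adjacent_sym[of E ends x y] by blast

lemma R_U: "x \<in> U \<Longrightarrow> y \<in> U \<Longrightarrow> R x y \<Longrightarrow> adj x y"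
  unfolding R_def using b1U by auto

lemma adj_R: assumes "rw adj U p" shows "rw R U p"
proof -
  have "set p \<subseteq> U" using assms unfolding rw_def by simp
  then show ?thesis using assms by (intro rw_mono[OF assms]) (auto simp: R_def)
qed

lemma R_rw_U: assumes "rw R U p" shows "rw adj U p"
proof -
  have "set p \<subseteq> U" using assms unfolding rw_def by simp
  then show ?thesis using assms by (intro rw_mono[OF assms]) (auto intro: R_U)
qed

definition S :: "'v set" where "S = insert b1 U"

lemma finS: "finite S" unfolding S_def using finU by simp

lemma cardS: "card S \<ge> 3" unfolding S_def using finU b1U card_U by simp

lemma conn_U: "x \<in> U \<Longrightarrow> \<exists>p. rw adj U p \<and> hd p = x \<and> last p = a2"
proof -
  assume xU: "x \<in> U"
  have "x \<in> V - {b1}" "a2 \<in> V - {b1}" using xU a2U UsubV b1U by auto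
  then obtain p where p: "p \<noteq> []" "successively adj p" "set p \<subseteq> V - {b1}" "hd p = x" "last p = a2"
    using conn_G b1V by blast
  show ?thesis
  proof (cases "set p \<subseteq> U")
    case True
    then show ?thesis using p unfolding rw_def by blast
  next
    case False
    then have "\<exists>z\<in>set p. z \<notin> U" by blast
    then obtain q where q: "rw adj (U \<inter> (V - {b1})) q" "hd q = x"
      "(last q = a1 \<and> b1 \<in> V - {b1}) \<or> (last q = a2 \<and> b2 \<in> V - {b1})"
      using exit_walk[OF p(1,2,3)] p(4) xU by auto
    have "rw adj U q" using q(1) unfolding rw_def by auto
    then show ?thesis using q by auto
  qed
qed

lemma conn_S:
  "\<forall>u\<in>S. \<forall>x\<in>S-{u}. \<forall>y\<in>S-{u}. \<exists>p. rw R (S-{u}) p \<and> hd p = x \<and> last p = y"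
proof (intro ballI)
  fix u x y assume u: "u \<in> S" and x: "x \<in> S - {u}" and y: "y \<in> S - {u}"
  show "\<exists>p. rw R (S-{u}) p \<and> hd p = x \<and> last p = y"
  proof (cases "u = b1")
    case True
    then have SU: "S - {u} = U" unfolding S_def using b1U by auto
    have "\<And>z. z \<in> U \<Longrightarrow> \<exists>p. rw R U p \<and> hd p = z \<and> last p = a2"
      using conn_U adj_R by blast
    from conn_via_center[OF this R_sym] show ?thesis using x y SU by simp
  next
    case False
    then have uU: "u \<in> U" using u unfolding S_def by simp
    have "\<exists>p. rw R (S-{u}) p \<and> hd p = z \<and> last p = b1" if z: "z \<in> S - {u}" for z
    proof (cases "z = b1")
      case True
      then show ?thesis using z unfolding rw_def by (intro exI[of _ "[b1]"]) auto
    next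
      case False
      then have zU: "z \<in> U" "z \<noteq> u" using z unfolding S_def by auto
      have "z \<in> V - {u}" "b1 \<in> V - {u}" using zU UsubV b1V uU b1U by auto
      then obtain p where p: "p \<noteq> []" "successively adj p" "set p \<subseteq> V - {u}" "hd p = z" "last p = b1"
        using conn_G uU UsubV by blast
      have "\<exists>z\<in>set p. z \<notin> U" using p b1U by (metis last_in_set)
      then obtain q where q: "rw adj (U \<inter> (V - {u})) q" "hd q = z"
        "(last q = a1 \<and> b1 \<in> V - {u}) \<or> (last q = a2 \<and> b2 \<in> V - {u})"
        using exit_walk[OF p(1,2,3)] p(4) zU by auto
      have qne: "q \<noteq> []" and sq: "successively adj q" and qU: "set q \<subseteq> U - {u}"
        using q(1) unfolding rw_def by auto
      have sqR: "successively R q" using sq by (rule successively_mono) (use qU in \<open>auto simp: R_def\<close>)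
      have "R (last q) b1" using q(3) unfolding R_def by auto
      then have "successively R (q @ [b1])" using sqR qne by (simp add: successively_append_iff)
      moreover have "set (q @ [b1]) \<subseteq> S - {u}" using qU b1U uU unfolding S_def by auto
      ultimately have "rw R (S-{u}) (q @ [b1])" unfolding rw_def by simp
      then show ?thesis using q(2) qne by (intro exI[of _ "q @ [b1]"]) simp
    qed
    from conn_via_center[OF this R_sym] show ?thesis using x y by simp
  qed
qed


lemma path_split:
  assumes P: "rp R S P" "hd P = b1" "last P = v" and vU: "v \<in> U"
  shows "\<exists>P'. P = b1 # P' \<and> P' \<noteq> [] \<and> rw adj U P' \<and> distinct P' \<and> (hd P' = a1 \<or> hd P' = a2)
              \<and> last P' = v"
proof -
  have Pne: "P \<noteq> []" and sP: "successively R P" and dP: "distinct P" and SP: "set P \<subseteq> S"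
    using P(1) unfolding rp_def rw_def by auto
  obtain P' where PP: "P = b1 # P'" using Pne P(2) by (cases P) auto
  have P'ne: "P' \<noteq> []" using PP P(3) vU b1U by auto
  have b1P': "b1 \<notin> set P'" using dP PP by simp
  have P'U: "set P' \<subseteq> U" using SP PP b1P' unfolding S_def by auto
  have Rh: "R b1 (hd P')" and sP': "successively R P'" using sP PP P'ne by (auto simp: successively_Cons)
  have "hd P' \<in> set P'" using P'ne by simp
  then have hd: "hd P' = a1 \<or> hd P' = a2" using Rh b1U b1P' unfolding R_def by auto
  have "rw R U P'" using P'ne sP' P'U unfolding rw_def by simp
  then have "rw adj U P'" by (rule R_rw_U)
  moreover have "last P' = v" using PP P'ne P(3) by simp
  ultimately show ?thesis using PP P'ne dP hd by auto
qed

lemma distinct_hd_last: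
  assumes "distinct xs" "xs \<noteq> []" "hd xs = last xs"
  shows "length xs = 1"
proof (cases xs)
  case Nil then show ?thesis using assms by simp
next
  case (Cons x t)
  show ?thesis
  proof (cases "t = []")
    case True then show ?thesis using Cons by simp
  next
    case False
    then have "last xs \<in> set t" using Cons by simp
    then show ?thesis using assms Cons by auto
  qed
qed

lemma combine:
  assumes X: "rw adj U X" "hd X = a1" "last X = v" "distinct X"
    and Y: "rw adj U Y" "hd Y = a2" "last Y = v" "distinct Y"
    and XY: "set X \<inter> set Y \<subseteq> {v}"
  shows "\<exists>q1 q2. rw adj U q1 \<and> hd q1 = a1 \<and> last q1 = v \<and> rw adj U q2 \<and> hd q2 = v \<and> last q2 = a2
     \<and> distinct (q1 @ tl q2)"
proof -
  note r = rw_adj_rev[OF Y(1)]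
  have Yne: "Y \<noteq> []" using Y(1) unfolding rw_def by simp
  obtain t where t: "rev Y = v # t" using Yne r(2) Y(3) by (cases "rev Y") auto
  have dt: "distinct (v # t)" using Y(4) t by (metis distinct_rev)
  have "set t \<subseteq> set Y" using t by (metis set_rev set_subset_Cons)
  then have "set X \<inter> set t = {}" using XY dt by auto
  then have "distinct (X @ tl (rev Y))" using X(4) dt t by simp
  then show ?thesis using X r Y by (intro exI[of _ X] exI[of _ "rev Y"]) simp
qed

lemma fan:
  assumes vU: "v \<in> U"
  shows "\<exists>q1 q2. rw adj U q1 \<and> hd q1 = a1 \<and> last q1 = v \<and> rw adj U q2 \<and> hd q2 = v \<and> last q2 = a2
     \<and> distinct (q1 @ tl q2)"
proof -
  have "b1 \<in> S" "v \<in> S" "b1 \<noteq> v" using vU b1U unfolding S_def by auto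
  then have "two_paths R S b1 v" using whitney[OF finS cardS conn_S] by blast
  then obtain P Q where PQ: "rp R S P" "rp R S Q" "hd P = b1" "last P = v" "hd Q = b1" "last Q = v"
    "set P \<inter> set Q = {b1,v}" "3 \<le> length P \<or> 3 \<le> length Q"
    unfolding two_paths_def by blast
  obtain P' where P': "P = b1 # P'" "P' \<noteq> []" "rw adj U P'" "distinct P'" "hd P' = a1 \<or> hd P' = a2" "last P' = v"
    using path_split[OF PQ(1,3,4) vU] by blast
  obtain Q' where Q': "Q = b1 # Q'" "Q' \<noteq> []" "rw adj U Q'" "distinct Q'" "hd Q' = a1 \<or> hd Q' = a2" "last Q' = v"
    using path_split[OF PQ(2,5,6) vU] by blast
  have b1P': "b1 \<notin> set P'" using PQ(1) P'(1) unfolding rp_def by simp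
  have int: "set P' \<inter> set Q' \<subseteq> {v}" using PQ(7) P'(1) Q'(1) b1P' by auto
  have ne: "hd P' \<noteq> hd Q'"
  proof
    assume h: "hd P' = hd Q'"
    have "hd P' \<in> set P'" "hd Q' \<in> set Q'" using P'(2) Q'(2) by simp_all
    then have "hd P' = v" using int h by auto
    then have "length P' = 1" "length Q' = 1" using distinct_hd_last P' Q' h by metis+
    then show False using PQ(8) P'(1) Q'(1) by simp
  qed
  show ?thesis
  proof (cases "hd P' = a1")
    case True
    then have "hd Q' = a2" using ne Q'(5) by auto
    then show ?thesis using combine[OF P'(3) True P'(6) P'(4) Q'(3) _ Q'(6) Q'(4) int] by blast
  next
    case False
    then have h1: "hd P' = a2" "hd Q' = a1" using ne P'(5) Q'(5) by auto
    have int': "set Q' \<inter> set P' \<subseteq> {v}" using int by blast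
    show ?thesis using combine[OF Q'(3) h1(2) Q'(6) Q'(4) P'(3) h1(1) P'(6) P'(4) int'] by blast
  qed
qed


definition ball :: "'v \<Rightarrow> nat \<Rightarrow> 'v set" where
  "ball a k = {u. \<exists>q. rw adj U q \<and> hd q = a \<and> last q = u \<and> length q \<le> k}"

definition N :: "'v \<Rightarrow> 'v set" where "N x = {y. adj x y}"

lemma ball_sub: "ball a k \<subseteq> U"
  unfolding ball_def rw_def by (auto dest: last_in_set)

lemma ball_fin: "finite (ball a k)" using ball_sub finU finite_subset by blast

lemma ball0: "ball a 0 = {}" unfolding ball_def rw_def by auto

lemma ball1: assumes "a \<in> U" shows "ball a (Suc 0) = {a}"
proof
  show "ball a (Suc 0) \<subseteq> {a}"
  proof
    fix u assume "u \<in> ball a (Suc 0)"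
    then obtain q where q: "rw adj U q" "hd q = a" "last q = u" "length q \<le> Suc 0" unfolding ball_def by blast
    then have "q \<noteq> []" unfolding rw_def by simp
    then obtain x where "q = [x]" using q(4) by (cases q) auto
    then show "u \<in> {a}" using q by simp
  qed
  show "{a} \<subseteq> ball a (Suc 0)" using assms unfolding ball_def rw_def
    by (auto intro!: exI[of _ "[a]"])
qed

lemma ball_mono: "k \<le> k' \<Longrightarrow> ball a k \<subseteq> ball a k'"
  unfolding ball_def by fastforce

lemma sph_pred:
  assumes u: "u \<in> ball a (Suc (Suc k)) - ball a (Suc k)"
  shows "\<exists>u'. u' \<in> ball a (Suc k) - ball a k \<and> adj u' u"
proof -
  obtain q where q: "rw adj U q" "hd q = a" "last q = u" "length q \<le> Suc (Suc k)"
    using u unfolding ball_def by blast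
  have "\<not> length q \<le> Suc k" using u q unfolding ball_def by blast
  then have lq: "length q = Suc (Suc k)" using q(4) by simp
  have qne: "q \<noteq> []" using q(1) unfolding rw_def by simp
  obtain q' where qq: "q = q' @ [u]" using qne q(3) by (metis append_butlast_last_id)
  have lq': "length q' = Suc k" using lq qq by simp
  then have q'ne: "q' \<noteq> []" by auto
  have sq: "successively adj (q' @ [u])" and Uq: "set (q' @ [u]) \<subseteq> U" using q(1) qq unfolding rw_def by auto
  have rq': "rw adj U q'" using sq Uq q'ne unfolding rw_def by (simp add: successively_append_iff)
  have adju: "adj (last q') u" using sq q'ne by (simp add: successively_append_iff)
  have hq': "hd q' = a" using q(2) qq q'ne by simp
  have in1: "last q' \<in> ball a (Suc k)" unfolding ball_def using rq' hq' lq' by auto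
  have nin: "last q' \<notin> ball a k"
  proof
    assume "last q' \<in> ball a k"
    then obtain r where r: "rw adj U r" "hd r = a" "last r = last q'" "length r \<le> k"
      unfolding ball_def by blast
    have rne: "r \<noteq> []" using r(1) unfolding rw_def by simp
    have "successively adj (r @ [u])" using r(1) r(3) adju rne unfolding rw_def
      by (simp add: successively_append_iff)
    moreover have "set (r @ [u]) \<subseteq> U" using r(1) Uq unfolding rw_def by auto
    ultimately have "rw adj U (r @ [u])" unfolding rw_def by simp
    then have "u \<in> ball a (Suc k)" unfolding ball_def using r rne by (intro CollectI exI[of _ "r @ [u]"]) simp
    then show False using u by simp
  qed
  show ?thesis using in1 nin adju by blast
qed

lemma card_star:
  assumes "finite I" "I \<subseteq> E" "\<forall>e\<in>I. x \<in> ends e"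
  shows "card (\<Union>e\<in>I. ends e - {x}) \<le> card I"
proof -
  have "card (\<Union>e\<in>I. ends e - {x}) \<le> (\<Sum>e\<in>I. card (ends e - {x}))"
    using assms(1) by (rule card_UN_le)
  also have "\<dots> \<le> (\<Sum>e\<in>I. 1)"
  proof (rule sum_mono)
    fix e assume e: "e \<in> I"
    then have "card (ends e) = 2" "x \<in> ends e" using mg assms unfolding multigraph_def by auto
    then show "card (ends e - {x}) \<le> 1" by simp
  qed
  finally show ?thesis by simp
qed

lemma N_sub: "N x \<inter> W \<subseteq> (\<Union>e\<in>{e\<in>E. x \<in> ends e \<and> (ends e - {x}) \<inter> W \<noteq> {}}. ends e - {x})"
proof
  fix y assume y: "y \<in> N x \<inter> W"
  then obtain e where e: "e \<in> E" "ends e = {x,y}" unfolding N_def adjacent_def by blast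
  have "x \<noteq> y" using y adj_ends unfolding N_def by auto
  then show "y \<in> (\<Union>e\<in>{e\<in>E. x \<in> ends e \<and> (ends e - {x}) \<inter> W \<noteq> {}}. ends e - {x})" using e y by auto
qed

lemma N_card: assumes "x \<in> V" shows "card (N x) \<le> 3" "finite (N x)"
proof -
  have fin: "finite {e\<in>E. x \<in> ends e \<and> (ends e - {x}) \<inter> UNIV \<noteq> {}}" using finE by simp
  have "card (N x) \<le> card (\<Union>e\<in>{e\<in>E. x \<in> ends e \<and> (ends e - {x}) \<inter> UNIV \<noteq> {}}. ends e - {x})"
    using N_sub[of x UNIV] by (intro card_mono) (use fin finE mg in \<open>auto simp: multigraph_def intro: finite_subset\<close>)
  also have "\<dots> \<le> card {e\<in>E. x \<in> ends e \<and> (ends e - {x}) \<inter> UNIV \<noteq> {}}"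
    by (rule card_star[OF fin]) auto
  also have "\<dots> \<le> card {e\<in>E. x \<in> ends e}" by (rule card_mono) (use finE in auto)
  also have "\<dots> = 3" using cub assms unfolding cubic_def degree_def by simp
  finally show "card (N x) \<le> 3" .
  show "finite (N x)" using adj_ends finV unfolding N_def by (metis (no_types, lifting) mem_Collect_eq rev_finite_subset subsetI)
qed

lemma N_port:
  assumes "a \<in> U" "b \<notin> U" "e \<in> E" "ends e = {a, b}"
  shows "card (N a \<inter> U) \<le> 2"
proof -
  define I where "I = {e\<in>E. a \<in> ends e \<and> (ends e - {a}) \<inter> U \<noteq> {}}"
  have fin: "finite I" unfolding I_def using finE by simp
  have "finite (\<Union>e\<in>I. ends e - {a})" using fin mg unfolding I_def multigraph_def by auto
  then have "card (N a \<inter> U) \<le> card (\<Union>e\<in>I. ends e - {a})"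
    using N_sub[of a U] unfolding I_def by (rule card_mono)
  also have "\<dots> \<le> card I" by (rule card_star[OF fin]) (auto simp: I_def)
  also have "card I \<le> card ({e'\<in>E. a \<in> ends e'} - {e})"
  proof (rule card_mono)
    show "finite ({e'\<in>E. a \<in> ends e'} - {e})" using finE by simp
    show "I \<subseteq> {e'\<in>E. a \<in> ends e'} - {e}"
    proof
      fix e' assume e': "e' \<in> I"
      then have "e' \<in> E" "a \<in> ends e'" unfolding I_def by auto
      moreover have "e' \<noteq> e"
      proof
        assume "e' = e"
        then have "(ends e - {a}) \<inter> U \<noteq> {}" using e' unfolding I_def by simp
        moreover have "(ends e - {a}) \<inter> U = {}" using assms by auto
        ultimately show False by simp
      qed
      ultimately show "e' \<in> {e'\<in>E. a \<in> ends e'} - {e}" by simp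
    qed
  qed
  also have "\<dots> = 3 - 1"
  proof -
    have "card {e'\<in>E. a \<in> ends e'} = 3" using cub assms(1) UsubV unfolding cubic_def degree_def by auto
    moreover have "e \<in> {e'\<in>E. a \<in> ends e'}" using assms by simp
    ultimately show ?thesis using finE by (simp add: card_Diff_singleton)
  qed
  finally show ?thesis by simp
qed


lemma sph_card:
  assumes aU: "a \<in> U" and Na: "card (N a \<inter> U) \<le> 2"
  shows "card (ball a (Suc k) - ball a k) \<le> 2 ^ k"
proof (induction k)
  case 0
  then show ?case using ball1[OF aU] ball0 by simp
next
  case (Suc k)
  define Sk where "Sk = ball a (Suc k) - ball a k"
  have finSk: "finite Sk" unfolding Sk_def using ball_fin by simp
  have sub: "ball a (Suc (Suc k)) - ball a (Suc k) \<subseteq> (\<Union>u'\<in>Sk. N u' \<inter> U - ball a k)"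
  proof
    fix u assume u: "u \<in> ball a (Suc (Suc k)) - ball a (Suc k)"
    obtain u' where u': "u' \<in> Sk" "adj u' u" using sph_pred[OF u] unfolding Sk_def by blast
    have "u \<in> U" using u ball_sub by blast
    moreover have "u \<notin> ball a k" using u ball_mono[of k "Suc k" a] by auto
    ultimately show "u \<in> (\<Union>u'\<in>Sk. N u' \<inter> U - ball a k)" using u' unfolding N_def by blast
  qed
  have each: "card (N u' \<inter> U - ball a k) \<le> 2" if u': "u' \<in> Sk" for u'
  proof (cases k)
    case 0
    then have "u' = a" using u' ball1[OF aU] ball0 unfolding Sk_def by simp
    then have "card (N u' \<inter> U - ball a k) \<le> card (N a \<inter> U)"
      by (intro card_mono) (use finU in auto)
    then show ?thesis using Na by simp
  next
    case (Suc k')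
    then have "u' \<in> ball a (Suc (Suc k')) - ball a (Suc k')" using u' unfolding Sk_def by simp
    then obtain w where w: "w \<in> ball a (Suc k') - ball a k'" "adj w u'" using sph_pred by blast
    have wk: "w \<in> ball a k" using w Suc by simp
    have u'V: "u' \<in> V" using u' ball_sub UsubV unfolding Sk_def by blast
    have wN: "w \<in> N u'" using adjacent_sym[OF w(2)] unfolding N_def by simp
    have "N u' \<inter> U - ball a k \<subseteq> N u' - {w}" using wk by blast
    then have "card (N u' \<inter> U - ball a k) \<le> card (N u' - {w})"
      using N_card(2)[OF u'V] by (intro card_mono) auto
    also have "\<dots> = card (N u') - 1" using wN N_card(2)[OF u'V] by simp
    also have "\<dots> \<le> 2" using N_card(1)[OF u'V] by simp
    finally show ?thesis .
  qed
  have "card (ball a (Suc (Suc k)) - ball a (Suc k)) \<le> card (\<Union>u'\<in>Sk. N u' \<inter> U - ball a k)"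
    using sub by (rule card_mono[rotated]) (use finU in auto)
  also have "\<dots> \<le> (\<Sum>u'\<in>Sk. card (N u' \<inter> U - ball a k))" using finSk by (rule card_UN_le)
  also have "\<dots> \<le> (\<Sum>u'\<in>Sk. 2)" using each by (rule sum_mono)
  also have "\<dots> = 2 * card Sk" by simp
  also have "\<dots> \<le> 2 * 2 ^ k" using Suc.IH unfolding Sk_def by simp
  finally show ?case by simp
qed

lemma ball_card:
  assumes aU: "a \<in> U" and Na: "card (N a \<inter> U) \<le> 2"
  shows "card (ball a k) + 1 \<le> 2 ^ k"
proof (induction k)
  case 0 then show ?case using ball0 by simp
next
  case (Suc k)
  have "ball a (Suc k) \<subseteq> ball a k \<union> (ball a (Suc k) - ball a k)" by blast
  then have "card (ball a (Suc k)) \<le> card (ball a k \<union> (ball a (Suc k) - ball a k))"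
    by (intro card_mono) (use ball_fin in auto)
  also have "\<dots> \<le> card (ball a k) + card (ball a (Suc k) - ball a k)" by (rule card_Un_le)
  also have "\<dots> \<le> card (ball a k) + 2 ^ k" using sph_card[OF aU Na] by simp
  finally show ?case using Suc.IH by simp
qed

lemma good_path:
  assumes vU: "v \<in> U" and v1: "v \<notin> ball a1 d" and v2: "v \<notin> ball a2 d"
  shows "\<exists>p. path E ends p \<and> hd p = b1 \<and> last p = b2 \<and> set (butlast (tl p)) \<subseteq> U \<and>
             path_length p \<ge> 2 * d + 2"
proof -
  obtain q1 q2 where q: "rw adj U q1" "hd q1 = a1" "last q1 = v" "rw adj U q2" "hd q2 = v" "last q2 = a2"
    "distinct (q1 @ tl q2)" using fan[OF vU] by blast
  have l1: "length q1 > d" using v1 q unfolding ball_def by force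
  note r2 = rw_adj_rev[OF q(4)]
  have "length (rev q2) > d" using v2 r2 q unfolding ball_def by force
  then have l2: "length q2 > d" by simp
  define q where "q = q1 @ tl q2"
  have "last q1 = hd q2" using q by simp
  note qa = rw_append[OF q(1) q(4) this]
  have rq: "rw adj U q" "hd q = a1" "last q = a2" using qa q unfolding q_def by auto
  have q2ne: "q2 \<noteq> []" using q(4) unfolding rw_def by simp
  have lq: "length q \<ge> 2 * d + 1" unfolding q_def using l1 l2 q2ne by simp
  have qne: "q \<noteq> []" and sq: "successively adj q" and qU: "set q \<subseteq> U" using rq(1) unfolding rw_def by auto
  define p where "p = b1 # q @ [b2]"
  have ab1: "adj b1 a1" unfolding adjacent_def using e1E e1 by (auto simp: insert_commute)
  have ab2: "adj a2 b2" unfolding adjacent_def using e2E e2 by auto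
  have "successively adj (q @ [b2])" using sq qne rq(3) ab2 by (simp add: successively_append_iff)
  then have "successively adj p" unfolding p_def using ab1 rq(2) qne by (cases q) auto
  moreover have "distinct p" unfolding p_def using q(7) qU b1U b2U b12 unfolding q_def by auto
  ultimately have "path E ends p" unfolding path_def walk_iff p_def by simp
  moreover have "hd p = b1" "last p = b2" "set (butlast (tl p)) \<subseteq> U" unfolding p_def using qU by auto
  moreover have "path_length p \<ge> 2 * d + 2" unfolding p_def path_length_def using lq by simp
  ultimately show ?thesis by blast
qed

lemma exists_pow:
  assumes "(2::nat) \<le> n"
  shows "\<exists>k. 1 \<le> k \<and> 2 ^ k \<le> n \<and> n < 2 ^ Suc k"
proof -
  define K where "K = {k. (2::nat) ^ k \<le> n}"
  have "K \<subseteq> {..n}"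
  proof
    fix k assume "k \<in> K"
    then have "2 ^ k \<le> n" unfolding K_def by simp
    moreover have "k < 2 ^ k" by (rule less_exp)
    ultimately have "k \<le> n" by linarith
    then show "k \<in> {..n}" by simp
  qed
  then have finK: "finite K" using finite_subset by blast
  have "1 \<in> K" unfolding K_def using assms by simp
  define k where "k = Max K"
  have "k \<in> K" unfolding k_def using finK \<open>1 \<in> K\<close> by (intro Max_in) auto
  moreover have "1 \<le> k" unfolding k_def using finK \<open>1 \<in> K\<close> by simp
  moreover have "\<not> 2 ^ Suc k \<le> n"
  proof
    assume "2 ^ Suc k \<le> n"
    then have "Suc k \<in> K" unfolding K_def by simp
    then have "Suc k \<le> k" unfolding k_def using finK by simp
    then show False by simp
  qed
  ultimately show ?thesis unfolding K_def by (intro exI[of _ k]) auto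
qed

lemma final:
  "\<exists>p. path E ends p \<and> hd p = b1 \<and> last p = b2 \<and> set (butlast (tl p)) \<subseteq> U \<and>
             real (path_length p) \<ge> 2 * log 2 (card U) - 2 * log 2 (log 2 (card U)) - 8"
proof -
  define n where "n = card U"
  have n2: "n \<ge> 2" unfolding n_def using card_U .
  obtain k where k: "1 \<le> k" "2 ^ k \<le> n" "n < 2 ^ Suc k" using exists_pow[OF n2] by blast
  define d where "d = k - 1"
  have dk: "Suc d = k" unfolding d_def using k(1) by simp
  have N1: "card (N a1 \<inter> U) \<le> 2" using N_port[OF a1U b1U e1E e1] .
  have N2: "card (N a2 \<inter> U) \<le> 2" using N_port[OF a2U b2U e2E e2] .
  have "card (ball a1 d \<union> ball a2 d) \<le> card (ball a1 d) + card (ball a2 d)" by (rule card_Un_le)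
  also have "\<dots> < 2 ^ Suc d" using ball_card[OF a1U N1, of d] ball_card[OF a2U N2, of d] by simp
  also have "\<dots> \<le> card U" using k(2) dk unfolding n_def by simp
  finally have "\<not> U \<subseteq> ball a1 d \<union> ball a2 d"
    using card_mono[of U "ball a1 d \<union> ball a2 d"] finU by (metis not_le finite_Un ball_fin card_mono)
  then obtain v where v: "v \<in> U" "v \<notin> ball a1 d" "v \<notin> ball a2 d" by blast
  obtain p where p: "path E ends p" "hd p = b1" "last p = b2" "set (butlast (tl p)) \<subseteq> U"
    "path_length p \<ge> 2 * d + 2" using good_path[OF v] by blast
  have pl: "real (path_length p) \<ge> 2 * real k" using p(5) dk by linarith
  have "log 2 (real n) < real (Suc k)" using log2_of_power_less[OF k(3)] n2 by simp
  moreover have "log 2 (real n) \<ge> 1"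
  proof -
    have "log 2 (real n) \<ge> log 2 2" using n2 by (subst log_le_cancel_iff) auto
    then show ?thesis by simp
  qed
  then have "log 2 (log 2 (real n)) \<ge> 0" by simp
  ultimately have "2 * log 2 (real n) - 2 * log 2 (log 2 (real n)) - 8 \<le> 2 * real k" by simp
  then show ?thesis using p pl unfolding n_def by (intro exI[of _ p]) simp
qed

end


theorem lemma15:
  fixes V :: "'v set" and E :: "'e set" and ends :: "'e \<Rightarrow> 'v set"
    and U :: "'v set" and e1 e2 :: 'e and a1 a2 b1 b2 :: 'v
  assumes "multigraph V E ends"
    and "cubic V E ends"
    and "two_connected V E ends"
    and "tombolo_cut V E ends U"
    and "U \<noteq> V"
    and "cut_set E ends U = {e1, e2}"
    and "ends e1 = {a1, b1}" and "a1 \<in> U" and "b1 \<notin> U"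
    and "ends e2 = {a2, b2}" and "a2 \<in> U" and "b2 \<notin> U"
  shows "\<exists>p. path E ends p \<and> hd p = b1 \<and> last p = b2 \<and>
             set (butlast (tl p)) \<subseteq> U \<and>
             real (path_length p) \<ge>
               2 * log 2 (card U) - 2 * log 2 (log 2 (card U)) - 8"
  proof -
  have "setting V E ends U e1 e2 a1 a2 b1 b2" using assms unfolding setting_def by blast
  then show ?thesis by (rule setting.final)
qed

end
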